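(* Let $V\subset\mathbb{R}^d$ be the closure of a bounded domain. Then $(\mathscr{S}_V,d)$ is a complete metric space. If in addition $V$ is convex, then $(\mathscr{S}_V,d)$ is separable.
   Context: $\mathscr{C}_V:=\{h\delta_\gamma\in\mathcal{M}(V):h\ge0,\ \gamma\in V\}$. $d_F(\rho^1,\rho^2):=\sup\{\int_V\varphi\,d(\rho^1-\rho^2):\varphi\in C(V),\ \|\varphi\|_\infty\le1,\ \mathrm{Lip}(\varphi)\le1\}$. $\mathscr{S}_V$ is the set of narrowly continuous curves $t\mapsto\rho_t\in\mathcal{M}^+(V)$, $t\in[0,1]$, with $\rho_t\in\mathscr{C}_V$ for all $t$; narrow continuity means continuity of $t\mapsto\int_V\varphi\,d\rho_t$ for all $\varphi\in C(V)$. $d(\rho^1,\rho^2):=\sup_{t\in[0,1]}d_F(\rho^1_t,\rho^2_t)$. *)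

theory Defs
  imports "HOL-Analysis.Analysis" "HOL-Probability.Probability"
begin

definition meas_V :: "'a::euclidean_space set \<Rightarrow> 'a measure" where
  "meas_V V = restrict_space borel V"

definition CV :: "'a::euclidean_space set \<Rightarrow> 'a measure set" where
  "CV V = {scale_measure (ennreal h) (return (meas_V V) \<gamma>) | h \<gamma>. h \<ge> 0 \<and> \<gamma> \<in> V}"

definition flat_tests :: "'a::euclidean_space set \<Rightarrow> ('a \<Rightarrow> real) set" where
  "flat_tests V = {\<phi>. continuous_on V \<phi> \<and> (\<forall>x\<in>V. \<bar>\<phi> x\<bar> \<le> 1) \<and> 1-lipschitz_on V \<phi>}"

definition dF :: "'a::euclidean_space set \<Rightarrow> 'a measure \<Rightarrow> 'a measure \<Rightarrow> real" where
  "dF V \<rho>1 \<rho>2 = (SUP \<phi>\<in>flat_tests V. integral\<^sup>L \<rho>1 \<phi> - integral\<^sup>L \<rho>2 \<phi>)"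

definition narrowly_continuous :: "'a::euclidean_space set \<Rightarrow> (real \<Rightarrow> 'a measure) \<Rightarrow> bool" where
  "narrowly_continuous V \<rho> \<longleftrightarrow>
     (\<forall>\<phi>::'a \<Rightarrow> real. continuous_on V \<phi> \<longrightarrow> continuous_on {0..1} (\<lambda>t. integral\<^sup>L (\<rho> t) \<phi>))"

definition SV :: "'a::euclidean_space set \<Rightarrow> (real \<Rightarrow> 'a measure) set" where
  "SV V = {\<rho>. \<rho> \<in> extensional {0..1} \<and> (\<forall>t\<in>{0..1}. \<rho> t \<in> CV V) \<and> narrowly_continuous V \<rho>}"

definition dS :: "'a::euclidean_space set \<Rightarrow> (real \<Rightarrow> 'a measure) \<Rightarrow> (real \<Rightarrow> 'a measure) \<Rightarrow> real" where
  "dS V \<rho>1 \<rho>2 = (if \<rho>1 \<in> SV V \<and> \<rho>2 \<in> SV V then (SUP t\<in>{0..1}. dF V (\<rho>1 t) (\<rho>2 t)) else 0)"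

end

theory Submission
  imports Defs
begin


lemma int_sd:
  fixes f :: "'a::euclidean_space \<Rightarrow> 'b::{banach,second_countable_topology}"
  assumes "h \<ge> 0" "x \<in> V" "continuous_on V f"
  shows "integral\<^sup>L (scale_measure (ennreal h) (return (meas_V V) x)) f = h *\<^sub>R f x"
proof -
  have sp: "x \<in> space (meas_V V)" using assms by (simp add: meas_V_def space_restrict_space)
  have m: "f \<in> borel_measurable (meas_V V)"
    unfolding meas_V_def by (rule borel_measurable_continuous_on_restrict[OF assms(3)])
  have eq: "scale_measure (ennreal h) (return (meas_V V) x) = density (return (meas_V V) x) (\<lambda>_. ennreal h)"
    by (rule measure_eqI) (auto simp: emeasure_density_const)
  show ?thesis unfolding eq
    apply (subst integral_density)
    using m sp assms by (auto simp: integral_return)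
qed

locale SVs =
  fixes V :: "'a::euclidean_space set" and R :: real
  assumes cV: "compact V" and neV: "V \<noteq> {}" and Rpos: "R > 0" and Rb: "\<And>x. x\<in>V \<Longrightarrow> norm x \<le> R"
begin

definition dir :: "real \<Rightarrow> 'a \<Rightarrow> 'a measure" where
  "dir h x = scale_measure (ennreal h) (return (meas_V V) x)"

definition P :: "'a measure \<Rightarrow> real \<times> 'a" where
  "P \<mu> = (integral\<^sup>L \<mu> (\<lambda>_. 1::real), integral\<^sup>L \<mu> (\<lambda>x. x))"

definition K :: "(real \<times> 'a) set" where
  "K = {(h, h *\<^sub>R x) | h x. h \<ge> 0 \<and> x \<in> V}"

definition x0 where "x0 = (SOME x. x \<in> V)"

lemma x0: "x0 \<in> V" unfolding x0_def using neV by (simp add: some_in_eq)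

definition Q :: "real \<times> 'a \<Rightarrow> 'a measure" where
  "Q p = dir (fst p) (if fst p = 0 then x0 else snd p /\<^sub>R fst p)"

lemma int_dir: fixes f :: "'a \<Rightarrow> 'b::{banach,second_countable_topology}" shows "h \<ge> 0 \<Longrightarrow> x \<in> V \<Longrightarrow> continuous_on V f \<Longrightarrow> integral\<^sup>L (dir h x) f = h *\<^sub>R f x"
  unfolding dir_def by (erule (2) int_sd)

lemma CV_iff: "\<mu> \<in> CV V \<longleftrightarrow> (\<exists>h x. h \<ge> 0 \<and> x \<in> V \<and> \<mu> = dir h x)"
  unfolding CV_def dir_def by auto

lemma P_dir: "h \<ge> 0 \<Longrightarrow> x \<in> V \<Longrightarrow> P (dir h x) = (h, h *\<^sub>R x)"
  unfolding P_def using int_dir[of h x "\<lambda>_. 1::real"] int_dir[of h x "\<lambda>x. x"] by (simp add: continuous_on_id)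

lemma dir0: "dir 0 x = dir 0 y"
  unfolding dir_def by (simp add: null_measure_def space_return sets_return)

lemma Q_dir: "h \<ge> 0 \<Longrightarrow> x \<in> V \<Longrightarrow> Q (h, h *\<^sub>R x) = dir h x"
  unfolding Q_def using dir0 by auto

lemma P_CV: "\<mu> \<in> CV V \<Longrightarrow> P \<mu> \<in> K"
  unfolding CV_iff K_def using P_dir by blast

lemma QP: "\<mu> \<in> CV V \<Longrightarrow> Q (P \<mu>) = \<mu>"
  unfolding CV_iff using P_dir Q_dir by auto

lemma Q_CV: "p \<in> K \<Longrightarrow> Q p \<in> CV V"
  unfolding K_def CV_iff using Q_dir by blast

lemma PQ: "p \<in> K \<Longrightarrow> P (Q p) = p"
  unfolding K_def using P_dir Q_dir by auto


abbreviation "T \<equiv> flat_tests V"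

lemma T_props:
  assumes "\<phi> \<in> T" "x \<in> V" "y \<in> V"
  shows "\<bar>\<phi> x\<bar> \<le> 1" "\<bar>\<phi> x - \<phi> y\<bar> \<le> norm (x - y)" "continuous_on V \<phi>"
  using assms lipschitz_onD[of 1 V \<phi> x y] unfolding flat_tests_def by (auto simp: dist_norm)

lemma T_neg: "\<phi> \<in> T \<Longrightarrow> (\<lambda>x. - \<phi> x) \<in> T"
  unfolding flat_tests_def lipschitz_on_def by (auto intro: continuous_intros simp: dist_norm abs_minus_commute)

lemma T_const: "\<bar>c\<bar> \<le> 1 \<Longrightarrow> (\<lambda>_. c) \<in> T"
  unfolding flat_tests_def lipschitz_on_def by (auto intro: continuous_intros)

lemma T_ne: "T \<noteq> {}" using T_const[of 0] by auto

lemma term_le: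
  assumes "\<phi> \<in> T" "h \<ge> 0" "k \<ge> 0" "x \<in> V" "y \<in> V"
  shows "h * \<phi> x - k * \<phi> y \<le> (2+R) * norm ((h, h *\<^sub>R x) - (k, k *\<^sub>R y))"
proof -
  note p = T_props[OF assms(1,4,5)]
  have a: "(h - k) * \<phi> x \<le> \<bar>h - k\<bar>"
  proof -
    have "(h - k) * \<phi> x \<le> \<bar>h - k\<bar> * \<bar>\<phi> x\<bar>" by (metis abs_ge_self abs_mult)
    also have "\<dots> \<le> \<bar>h - k\<bar> * 1" using p(1) by (intro mult_left_mono) auto
    finally show ?thesis by simp
  qed
  have b: "k * (\<phi> x - \<phi> y) \<le> k * norm (x - y)"
    using p(2) assms(3) by (intro mult_left_mono) auto
  have c: "k * norm (x - y) = norm (k *\<^sub>R x - k *\<^sub>R y)"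
    using assms(3) by (simp add: scaleR_diff_right[symmetric])
  have d: "norm (k *\<^sub>R x - k *\<^sub>R y) \<le> norm (k *\<^sub>R x - h *\<^sub>R x) + norm (h *\<^sub>R x - k *\<^sub>R y)"
    by (rule norm_diff_triangle_ineq[THEN order_trans[rotated]]) (simp add: norm_triangle_sub)
  have e: "norm (k *\<^sub>R x - h *\<^sub>R x) \<le> R * \<bar>h - k\<bar>"
  proof -
    have "norm (k *\<^sub>R x - h *\<^sub>R x) = \<bar>h - k\<bar> * norm x"
      by (metis norm_scaleR scaleR_diff_left norm_minus_commute)
    also have "\<dots> \<le> \<bar>h - k\<bar> * R" using Rb[OF assms(4)] by (simp add: mult_left_mono)
    finally show ?thesis by (simp add: mult.commute)
  qed
  let ?D = "(h, h *\<^sub>R x) - (k, k *\<^sub>R y)"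
  have f: "\<bar>h - k\<bar> \<le> norm ?D" using norm_fst_le[of "h - k" "h *\<^sub>R x - k *\<^sub>R y"] by simp
  have g: "norm (h *\<^sub>R x - k *\<^sub>R y) \<le> norm ?D" using norm_snd_le[of "h *\<^sub>R x - k *\<^sub>R y" "h - k"] by simp
  have "h * \<phi> x - k * \<phi> y = (h - k) * \<phi> x + k * (\<phi> x - \<phi> y)" by (simp add: algebra_simps)
  also have "\<dots> \<le> \<bar>h - k\<bar> + R * \<bar>h - k\<bar> + norm (h *\<^sub>R x - k *\<^sub>R y)"
    using a b c d e by linarith
  also have "\<dots> \<le> norm ?D + R * norm ?D + norm ?D"
    using f g Rpos mult_left_mono[OF f, of R] by linarith
  finally show ?thesis by (simp add: algebra_simps)
qed

lemma dF_dir: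
  assumes "h \<ge> 0" "k \<ge> 0" "x \<in> V" "y \<in> V"
  shows "dF V (dir h x) (dir k y) = (SUP \<phi>\<in>T. h * \<phi> x - k * \<phi> y)"
  unfolding dF_def using assms by (intro SUP_cong refl) (simp add: int_dir T_props(3))

lemma bdd_dir:
  assumes "h \<ge> 0" "k \<ge> 0" "x \<in> V" "y \<in> V"
  shows "bdd_above ((\<lambda>\<phi>. h * \<phi> x - k * \<phi> y) ` T)"
  using term_le[OF _ assms] by (intro bdd_aboveI2) 

lemma dF_upper_dir:
  assumes "h \<ge> 0" "k \<ge> 0" "x \<in> V" "y \<in> V"
  shows "dF V (dir h x) (dir k y) \<le> (2+R) * norm ((h, h *\<^sub>R x) - (k, k *\<^sub>R y))"
  unfolding dF_dir[OF assms] using T_ne term_le[OF _ assms] by (intro cSUP_least) auto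

lemma dF_ge_dir:
  assumes "h \<ge> 0" "k \<ge> 0" "x \<in> V" "y \<in> V" "\<phi> \<in> T"
  shows "h * \<phi> x - k * \<phi> y \<le> dF V (dir h x) (dir k y)"
  unfolding dF_dir[OF assms(1-4)] using bdd_dir[OF assms(1-4)] assms(5) by (rule cSUP_upper2) auto

lemma dF_lower_dir:
  assumes "h \<ge> 0" "k \<ge> 0" "x \<in> V" "y \<in> V"
  shows "norm ((h, h *\<^sub>R x) - (k, k *\<^sub>R y)) \<le> (2+R) * dF V (dir h x) (dir k y)"
proof -
  let ?d = "dF V (dir h x) (dir k y)"
  have 1: "\<bar>h - k\<bar> \<le> ?d"
    using dF_ge_dir[OF assms T_const[of 1]] dF_ge_dir[OF assms T_const[of "-1"]] by (simp add: abs_if)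
  let ?w = "h *\<^sub>R x - k *\<^sub>R y"
  have 2: "norm ?w \<le> (1+R) * ?d"
  proof (cases "?w = 0")
    case True
    have "0 \<le> ?d" using 1 by linarith
    then show ?thesis using True Rpos by simp
  next
    case False
    define u where "u = ?w /\<^sub>R norm ?w"
    have nu: "norm u = 1" using False by (simp add: u_def)
    define \<psi> where "\<psi> = (\<lambda>z. (z \<bullet> u) / (1+R))"
    have "\<psi> \<in> T" unfolding flat_tests_def
    proof (intro CollectI conjI ballI)
      show "continuous_on V \<psi>" unfolding \<psi>_def using Rpos by (intro continuous_intros) auto
      fix z assume z: "z \<in> V"
      have "\<bar>z \<bullet> u\<bar> \<le> norm z" using Cauchy_Schwarz_ineq2[of z u] nu by simp
      also have "\<dots> \<le> 1 + R" using Rb[OF z] by simp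
      finally have zz: "\<bar>z \<bullet> u\<bar> \<le> 1 + R" .
      have "\<bar>\<psi> z\<bar> = \<bar>z \<bullet> u\<bar> / (1+R)" unfolding \<psi>_def using Rpos by (simp add: abs_divide)
      also have "\<dots> \<le> 1" using zz Rpos by (simp add: divide_le_eq_1_pos)
      finally show "\<bar>\<psi> z\<bar> \<le> 1" .
    next
      show "1-lipschitz_on V \<psi>"
      proof (rule lipschitz_onI)
        fix z w assume "z \<in> V" "w \<in> V"
        have A: "\<bar>(z - w) \<bullet> u\<bar> \<le> norm (z - w)" using Cauchy_Schwarz_ineq2[of "z-w" u] nu by simp
        have "\<psi> z - \<psi> w = ((z - w) \<bullet> u) / (1+R)" unfolding \<psi>_def by (simp add: inner_diff_left diff_divide_distrib)
        then have "dist (\<psi> z) (\<psi> w) = \<bar>(z - w) \<bullet> u\<bar> / (1+R)" using Rpos by (simp add: dist_real_def abs_divide)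
        also have "\<dots> \<le> \<bar>(z - w) \<bullet> u\<bar>" using Rpos mult_left_mono[of 1 "1+R" "\<bar>(z - w) \<bullet> u\<bar>"] by (simp add: divide_le_eq)
        also have "\<dots> \<le> 1 * dist z w" using A by (simp add: dist_norm)
        finally show "dist (\<psi> z) (\<psi> w) \<le> 1 * dist z w" .
      qed simp
    qed
    from dF_ge_dir[OF assms this]
    have B: "h * \<psi> x - k * \<psi> y \<le> ?d" .
    have "h * \<psi> x - k * \<psi> y = (h * (x \<bullet> u) - k * (y \<bullet> u)) / (1+R)"
      unfolding \<psi>_def by (simp add: diff_divide_distrib)
    also have "h * (x \<bullet> u) - k * (y \<bullet> u) = ?w \<bullet> u" by (simp add: inner_diff_left)
    also have "?w \<bullet> u = norm ?w" unfolding u_def using False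
      by (simp add: inner_commute power2_norm_eq_inner[symmetric] power2_eq_square)
    finally have C: "norm ?w / (1+R) \<le> ?d" using B by simp
    show ?thesis using C Rpos by (simp add: divide_le_eq mult.commute)
  qed
  have "norm ((h, h *\<^sub>R x) - (k, k *\<^sub>R y)) \<le> \<bar>h - k\<bar> + norm ?w"
    using norm_Pair_le[of "h-k" ?w] by (simp add: abs_if)
  also have "\<dots> \<le> ?d + (1+R) * ?d" using 1 2 by linarith
  finally show ?thesis by (simp add: algebra_simps)
qed


lemma dF_ge:
  assumes "\<mu> \<in> CV V" "\<nu> \<in> CV V" "\<phi> \<in> T"
  shows "integral\<^sup>L \<mu> \<phi> - integral\<^sup>L \<nu> \<phi> \<le> dF V \<mu> \<nu>"
proof -
  obtain h x k y where hx: "h \<ge> 0" "x \<in> V" "\<mu> = dir h x" and ky: "k \<ge> 0" "y \<in> V" "\<nu> = dir k y"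
    using assms(1,2) unfolding CV_iff by blast
  show ?thesis using dF_ge_dir[OF hx(1) ky(1) hx(2) ky(2) assms(3)] unfolding hx(3) ky(3)
    using int_dir[OF hx(1,2) T_props(3)[OF assms(3) hx(2) hx(2)]] int_dir[OF ky(1,2) T_props(3)[OF assms(3) hx(2) hx(2)]] by simp
qed

lemma dF_up:
  assumes "\<mu> \<in> CV V" "\<nu> \<in> CV V"
  shows "dF V \<mu> \<nu> \<le> (2+R) * norm (P \<mu> - P \<nu>)"
proof -
  obtain h x k y where hx: "h \<ge> 0" "x \<in> V" "\<mu> = dir h x" and ky: "k \<ge> 0" "y \<in> V" "\<nu> = dir k y"
    using assms(1,2) unfolding CV_iff by blast
  show ?thesis using dF_upper_dir[OF hx(1) ky(1) hx(2) ky(2)] unfolding hx(3) ky(3) P_dir[OF hx(1,2)] P_dir[OF ky(1,2)] .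
qed

lemma dF_low:
  assumes "\<mu> \<in> CV V" "\<nu> \<in> CV V"
  shows "norm (P \<mu> - P \<nu>) \<le> (2+R) * dF V \<mu> \<nu>"
proof -
  obtain h x k y where hx: "h \<ge> 0" "x \<in> V" "\<mu> = dir h x" and ky: "k \<ge> 0" "y \<in> V" "\<nu> = dir k y"
    using assms(1,2) unfolding CV_iff by blast
  show ?thesis using dF_lower_dir[OF hx(1) ky(1) hx(2) ky(2)] unfolding hx(3) ky(3) P_dir[OF hx(1,2)] P_dir[OF ky(1,2)] .
qed

lemma dF_nonneg:
  assumes "\<mu> \<in> CV V" "\<nu> \<in> CV V"
  shows "0 \<le> dF V \<mu> \<nu>"
proof -
  have "0 \<le> (2+R) * dF V \<mu> \<nu>" using dF_low[OF assms] norm_ge_zero order_trans by blast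
  then show ?thesis using Rpos by (simp add: zero_le_mult_iff)
qed

lemma dF_self: "\<mu> \<in> CV V \<Longrightarrow> dF V \<mu> \<mu> = 0"
  using dF_up[of \<mu> \<mu>] dF_nonneg[of \<mu> \<mu>] by simp

lemma dF_eq0: "\<mu> \<in> CV V \<Longrightarrow> \<nu> \<in> CV V \<Longrightarrow> dF V \<mu> \<nu> = 0 \<Longrightarrow> \<mu> = \<nu>"
  using dF_low[of \<mu> \<nu>] QP by (metis mult_zero_right norm_le_zero_iff right_minus_eq)

lemma int_CV: "\<mu> \<in> CV V \<Longrightarrow> \<phi> \<in> T \<Longrightarrow> integral\<^sup>L \<mu> (\<lambda>x. - \<phi> x) = - integral\<^sup>L \<mu> \<phi>"
  by (rule integral_minus)

lemma dF_sym_le: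
  assumes "\<mu> \<in> CV V" "\<nu> \<in> CV V"
  shows "dF V \<nu> \<mu> \<le> dF V \<mu> \<nu>"
  unfolding dF_def[of V \<nu> \<mu>]
proof (rule cSUP_least[OF T_ne])
  fix \<phi> assume "\<phi> \<in> T"
  from dF_ge[OF assms T_neg[OF this]]
  show "integral\<^sup>L \<nu> \<phi> - integral\<^sup>L \<mu> \<phi> \<le> dF V \<mu> \<nu>" by simp
qed

lemma dF_sym: "\<mu> \<in> CV V \<Longrightarrow> \<nu> \<in> CV V \<Longrightarrow> dF V \<nu> \<mu> = dF V \<mu> \<nu>"
  using dF_sym_le by (meson antisym)

lemma dF_tri:
  assumes "\<mu> \<in> CV V" "\<nu> \<in> CV V" "\<kappa> \<in> CV V"
  shows "dF V \<mu> \<kappa> \<le> dF V \<mu> \<nu> + dF V \<nu> \<kappa>"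
  unfolding dF_def[of V \<mu> \<kappa>]
proof (rule cSUP_least[OF T_ne])
  fix \<phi> assume "\<phi> \<in> T"
  from dF_ge[OF assms(1,2) this] dF_ge[OF assms(2,3) this]
  show "integral\<^sup>L \<mu> \<phi> - integral\<^sup>L \<kappa> \<phi> \<le> dF V \<mu> \<nu> + dF V \<nu> \<kappa>" by simp
qed

definition arg :: "real \<times> 'a \<Rightarrow> 'a" where
  "arg p = (if fst p = 0 then x0 else snd p /\<^sub>R fst p)"

lemma Kmem: "p \<in> K \<Longrightarrow> fst p \<ge> 0 \<and> arg p \<in> V \<and> snd p = fst p *\<^sub>R arg p"
  unfolding K_def arg_def using x0 by auto

lemma Q_arg: "Q p = dir (fst p) (arg p)" unfolding Q_def arg_def by simp

lemma int_Q: "p \<in> K \<Longrightarrow> continuous_on V \<phi> \<Longrightarrow> integral\<^sup>L (Q p) \<phi> = fst p * \<phi> (arg p)"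
  using Kmem[of p] int_dir[of "fst p" "arg p" \<phi>] unfolding Q_arg by simp

lemma Phi_cont:
  assumes \<phi>: "continuous_on V (\<phi> :: 'a \<Rightarrow> real)"
  shows "continuous_on K (\<lambda>p. fst p * \<phi> (arg p))"
proof -
  obtain B where B: "\<And>z. z \<in> V \<Longrightarrow> \<bar>\<phi> z\<bar> \<le> B"
    using compact_imp_bounded[OF compact_continuous_image[OF \<phi> cV]] unfolding bounded_iff by fastforce
  show ?thesis unfolding continuous_on_def
  proof
    fix p assume pK: "p \<in> K"
    note kp = Kmem[OF pK]
    show "((\<lambda>p. fst p * \<phi> (arg p)) \<longlongrightarrow> fst p * \<phi> (arg p)) (at p within K)"
    proof (cases "fst p = 0")
      case True
      have f0: "(fst \<longlongrightarrow> 0) (at p within K)"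
        using tendsto_fst[OF tendsto_ident_at[of p K]] True by simp
      have "((\<lambda>q. fst q * \<phi> (arg q)) \<longlongrightarrow> 0) (at p within K)"
      proof (rule Lim_null_comparison)
        show "\<forall>\<^sub>F q in at p within K. norm (fst q * \<phi> (arg q)) \<le> B * \<bar>fst q\<bar>"
          unfolding eventually_at_filter
        proof (rule always_eventually, intro allI impI)
          fix q assume "q \<noteq> p" "q \<in> K"
          note kq = Kmem[OF this(2)]
          have "norm (fst q * \<phi> (arg q)) = \<bar>fst q\<bar> * \<bar>\<phi> (arg q)\<bar>" by (simp add: abs_mult)
          also have "\<dots> \<le> \<bar>fst q\<bar> * B" using B kq by (intro mult_left_mono) auto
          finally show "norm (fst q * \<phi> (arg q)) \<le> B * \<bar>fst q\<bar>" by (simp add: mult.commute)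
        qed
        show "((\<lambda>q. B * \<bar>fst q\<bar>) \<longlongrightarrow> 0) (at p within K)"
          using tendsto_mult_right_zero[OF tendsto_rabs_zero[OF f0], of B] by simp
      qed
      then show ?thesis using True by simp
    next
      case False
      then have apos: "fst p > 0" using kp by simp
      have f: "(fst \<longlongrightarrow> fst p) (at p within K)" by (rule tendsto_fst[OF tendsto_ident_at])
      have s: "(snd \<longlongrightarrow> snd p) (at p within K)" by (rule tendsto_snd[OF tendsto_ident_at])
      have evpos: "\<forall>\<^sub>F q in at p within K. fst q > 0" using order_tendstoD(1)[OF f apos] by simp
      have evK: "\<forall>\<^sub>F q in at p within K. q \<in> K" by (simp add: eventually_at_filter)
      have g: "((\<lambda>q. snd q /\<^sub>R fst q) \<longlongrightarrow> snd p /\<^sub>R fst p) (at p within K)"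
        using apos by (intro tendsto_intros f s) auto
      have argp: "arg p = snd p /\<^sub>R fst p" using False by (simp add: arg_def)
      have evV: "\<forall>\<^sub>F q in at p within K. snd q /\<^sub>R fst q \<in> V"
        using evpos evK by eventually_elim (metis Kmem arg_def order_less_irrefl)
      have c: "((\<lambda>q. \<phi> (snd q /\<^sub>R fst q)) \<longlongrightarrow> \<phi> (arg p)) (at p within K)"
        unfolding argp by (rule continuous_on_tendsto_compose[OF \<phi> g]) (use kp argp evV in auto)
      have "((\<lambda>q. fst q * \<phi> (snd q /\<^sub>R fst q)) \<longlongrightarrow> fst p * \<phi> (arg p)) (at p within K)"
        by (intro tendsto_mult f c)
      moreover have "\<forall>\<^sub>F q in at p within K. fst q * \<phi> (snd q /\<^sub>R fst q) = fst q * \<phi> (arg q)"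
        using evpos by eventually_elim (auto simp: arg_def)
      ultimately show ?thesis by (rule Lim_transform_eventually[where f="\<lambda>q. fst q * \<phi> (snd q /\<^sub>R fst q)"])
    qed
  qed
qed

definition curve :: "(real \<Rightarrow> real \<times> 'a) \<Rightarrow> real \<Rightarrow> 'a measure" where
  "curve g = (\<lambda>t. if t \<in> {0..1} then Q (g t) else undefined)"

lemma curve_SV:
  assumes g: "continuous_on {0..1} g" and gK: "\<And>t. t \<in> {0..1} \<Longrightarrow> g t \<in> K"
  shows "curve g \<in> SV V" "\<And>t. t \<in> {0..1} \<Longrightarrow> P (curve g t) = g t"
proof -
  show "\<And>t. t \<in> {0..1} \<Longrightarrow> P (curve g t) = g t" unfolding curve_def using PQ gK by simp
  have "narrowly_continuous V (curve g)" unfolding narrowly_continuous_def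
  proof (intro allI impI)
    fix \<phi> :: "'a \<Rightarrow> real" assume \<phi>: "continuous_on V \<phi>"
    have "continuous_on {0..1} ((\<lambda>p. fst p * \<phi> (arg p)) \<circ> g)"
      using gK by (intro continuous_on_compose[OF g] continuous_on_subset[OF Phi_cont[OF \<phi>]]) auto
    then show "continuous_on {0..1} (\<lambda>t. integral\<^sup>L (curve g t) \<phi>)"
      by (rule continuous_on_eq) (simp add: curve_def int_Q[OF gK \<phi>])
  qed
  then show "curve g \<in> SV V" unfolding SV_def curve_def extensional_def using Q_CV gK by auto
qed

lemma SV_CV: "\<rho> \<in> SV V \<Longrightarrow> t \<in> {0..1} \<Longrightarrow> \<rho> t \<in> CV V"
  unfolding SV_def by auto

lemma G_cont:
  assumes "\<rho> \<in> SV V"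
  shows "continuous_on {0..1} (\<lambda>t. P (\<rho> t))"
proof -
  have nc: "\<And>\<phi>::'a\<Rightarrow>real. continuous_on V \<phi> \<Longrightarrow> continuous_on {0..1} (\<lambda>t. integral\<^sup>L (\<rho> t) \<phi>)"
    using assms unfolding SV_def narrowly_continuous_def by auto
  have c: "continuous_on {0..1} (\<lambda>t. (integral\<^sup>L (\<rho> t) (\<lambda>_. 1::real),
             \<Sum>b\<in>Basis. integral\<^sup>L (\<rho> t) (\<lambda>z. z \<bullet> b) *\<^sub>R b))"
  proof (rule continuous_on_Pair)
    show "continuous_on {0..1} (\<lambda>t. integral\<^sup>L (\<rho> t) (\<lambda>_. 1::real))" by (rule nc) (rule continuous_on_const)
    show "continuous_on {0..1} (\<lambda>t. \<Sum>b\<in>Basis. integral\<^sup>L (\<rho> t) (\<lambda>z. z \<bullet> b) *\<^sub>R b)"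
    proof (rule continuous_on_sum)
      fix b :: 'a
      have "continuous_on {0..1} (\<lambda>t. integral\<^sup>L (\<rho> t) (\<lambda>z. z \<bullet> b))"
        by (rule nc) (intro continuous_on_inner continuous_on_id continuous_on_const)
      then show "continuous_on {0..1} (\<lambda>t. integral\<^sup>L (\<rho> t) (\<lambda>z. z \<bullet> b) *\<^sub>R b)"
        by (intro continuous_on_scaleR continuous_on_const)
    qed
  qed
  show ?thesis
  proof (rule continuous_on_eq[OF c])
    fix t :: real assume t: "t \<in> {0..1}"
    obtain h x where hx: "h \<ge> 0" "x \<in> V" "\<rho> t = dir h x" using SV_CV[OF assms t] unfolding CV_iff by blast
    have "(\<Sum>b\<in>Basis. integral\<^sup>L (\<rho> t) (\<lambda>z. z \<bullet> b) *\<^sub>R b) = (\<Sum>b\<in>Basis. (h * (x \<bullet> b)) *\<^sub>R b)"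
      unfolding hx(3) using hx by (intro sum.cong refl) (simp add: int_dir continuous_intros)
    also have "\<dots> = h *\<^sub>R x" by (simp add: euclidean_representation scaleR_sum_right[symmetric] flip: scaleR_scaleR)
    finally show "(integral\<^sup>L (\<rho> t) (\<lambda>_. 1::real), \<Sum>b\<in>Basis. integral\<^sup>L (\<rho> t) (\<lambda>z. z \<bullet> b) *\<^sub>R b) = P (\<rho> t)"
      unfolding hx(3) P_dir[OF hx(1,2)] using int_dir[OF hx(1,2), of "\<lambda>_. 1::real"] by simp
  qed
qed

end

context SVs begin

lemma D_bound:
  assumes "\<rho>1 \<in> SV V" "\<rho>2 \<in> SV V"
  obtains B where "\<And>t. t \<in> {0..1} \<Longrightarrow> norm (P (\<rho>1 t) - P (\<rho>2 t)) \<le> B"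
proof -
  have "continuous_on {0..1} (\<lambda>t. P (\<rho>1 t) - P (\<rho>2 t))"
    using G_cont[OF assms(1)] G_cont[OF assms(2)] by (rule continuous_on_diff)
  then have "bounded ((\<lambda>t. P (\<rho>1 t) - P (\<rho>2 t)) ` {0..1})"
    by (intro compact_imp_bounded compact_continuous_image) auto
  then obtain B where "\<forall>x\<in>{0..1}. norm (P (\<rho>1 x) - P (\<rho>2 x)) \<le> B" unfolding bounded_iff by auto
  then show ?thesis using that by blast
qed

lemma bdd_dS:
  assumes "\<rho>1 \<in> SV V" "\<rho>2 \<in> SV V"
  shows "bdd_above ((\<lambda>t. dF V (\<rho>1 t) (\<rho>2 t)) ` {0..1})"
proof -
  obtain B where B: "\<And>t. t \<in> {0..1} \<Longrightarrow> norm (P (\<rho>1 t) - P (\<rho>2 t)) \<le> B"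
    using D_bound[OF assms] by blast
  show ?thesis
  proof (rule bdd_aboveI2)
    fix t :: real assume t: "t \<in> {0..1}"
    have "dF V (\<rho>1 t) (\<rho>2 t) \<le> (2+R) * norm (P (\<rho>1 t) - P (\<rho>2 t))"
      using dF_up SV_CV assms t by blast
    also have "\<dots> \<le> (2+R) * B" using B[OF t] Rpos by (intro mult_left_mono) auto
    finally show "dF V (\<rho>1 t) (\<rho>2 t) \<le> (2+R) * B" .
  qed
qed

lemma dS_ge:
  assumes "\<rho>1 \<in> SV V" "\<rho>2 \<in> SV V" "t \<in> {0..1}"
  shows "dF V (\<rho>1 t) (\<rho>2 t) \<le> dS V \<rho>1 \<rho>2"
  unfolding dS_def using assms bdd_dS[OF assms(1,2)] by (auto intro: cSUP_upper)

lemma dS_le: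
  assumes "\<rho>1 \<in> SV V" "\<rho>2 \<in> SV V" "\<And>t. t \<in> {0..1} \<Longrightarrow> dF V (\<rho>1 t) (\<rho>2 t) \<le> c"
  shows "dS V \<rho>1 \<rho>2 \<le> c"
  unfolding dS_def using assms by (auto intro!: cSUP_least)

lemma dS_nonneg: "0 \<le> dS V \<rho>1 \<rho>2"
proof (cases "\<rho>1 \<in> SV V \<and> \<rho>2 \<in> SV V")
  case True
  then have "0 \<le> dF V (\<rho>1 0) (\<rho>2 0)" using dF_nonneg SV_CV by auto
  also have "\<dots> \<le> dS V \<rho>1 \<rho>2" using True dS_ge by auto
  finally show ?thesis .
qed (auto simp add: dS_def)

lemma dS_commute: "dS V \<rho>1 \<rho>2 = dS V \<rho>2 \<rho>1"
proof (cases "\<rho>1 \<in> SV V \<and> \<rho>2 \<in> SV V")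
  case True
  then show ?thesis unfolding dS_def using dF_sym SV_CV by (auto intro!: SUP_cong)
qed (auto simp add: dS_def)

lemma SV_ext: "\<rho> \<in> SV V \<Longrightarrow> \<rho> \<in> extensional {0..1}" unfolding SV_def by auto

lemma dS_zero:
  assumes "\<rho>1 \<in> SV V" "\<rho>2 \<in> SV V"
  shows "dS V \<rho>1 \<rho>2 = 0 \<longleftrightarrow> \<rho>1 = \<rho>2"
proof
  assume z: "dS V \<rho>1 \<rho>2 = 0"
  have "\<And>t. t \<in> {0..1} \<Longrightarrow> \<rho>1 t = \<rho>2 t"
  proof -
    fix t :: real assume t: "t \<in> {0..1}"
    have "dF V (\<rho>1 t) (\<rho>2 t) = 0"
      using dS_ge[OF assms t] z dF_nonneg[OF SV_CV[OF assms(1) t] SV_CV[OF assms(2) t]] by linarith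
    then show "\<rho>1 t = \<rho>2 t" using dF_eq0 SV_CV assms t by blast
  qed
  then show "\<rho>1 = \<rho>2" by (intro extensionalityI[OF SV_ext[OF assms(1)] SV_ext[OF assms(2)]])
next
  assume "\<rho>1 = \<rho>2"
  then have "dS V \<rho>1 \<rho>2 \<le> 0" using assms by (intro dS_le) (auto simp: dF_self SV_CV)
  then show "dS V \<rho>1 \<rho>2 = 0" using dS_nonneg by (meson antisym)
qed

lemma dS_triangle:
  assumes "\<rho>1 \<in> SV V" "\<rho>2 \<in> SV V" "\<rho>3 \<in> SV V"
  shows "dS V \<rho>1 \<rho>3 \<le> dS V \<rho>1 \<rho>2 + dS V \<rho>2 \<rho>3"
proof (rule dS_le[OF assms(1,3)])
  fix t :: real assume t: "t \<in> {0..1}"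
  have "dF V (\<rho>1 t) (\<rho>3 t) \<le> dF V (\<rho>1 t) (\<rho>2 t) + dF V (\<rho>2 t) (\<rho>3 t)"
    using dF_tri SV_CV assms t by blast
  also have "\<dots> \<le> dS V \<rho>1 \<rho>2 + dS V \<rho>2 \<rho>3" using dS_ge assms t by (meson add_mono)
  finally show "dF V (\<rho>1 t) (\<rho>3 t) \<le> dS V \<rho>1 \<rho>2 + dS V \<rho>2 \<rho>3" .
qed

lemma metric: "Metric_space (SV V) (dS V)"
  by unfold_locales (auto simp: dS_nonneg dS_commute dS_zero dS_triangle)

lemma closed_K: "closed K"
  unfolding closed_sequential_limits
proof (intro allI impI, elim conjE)
  fix x :: "nat \<Rightarrow> real \<times> 'a" and l assume xK: "\<forall>n. x n \<in> K" and xl: "x \<longlonglongrightarrow> l"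
  have f: "(\<lambda>n. fst (x n)) \<longlonglongrightarrow> fst l" by (rule tendsto_fst[OF xl])
  have s: "(\<lambda>n. snd (x n)) \<longlonglongrightarrow> snd l" by (rule tendsto_snd[OF xl])
  have a0: "fst l \<ge> 0" using f xK Kmem by (intro LIMSEQ_le_const[OF f]) auto
  show "l \<in> K"
  proof (cases "fst l = 0")
    case True
    have "(\<lambda>n. snd (x n)) \<longlonglongrightarrow> 0"
    proof (rule Lim_null_comparison)
      show "\<forall>\<^sub>F n in sequentially. norm (snd (x n)) \<le> R * fst (x n)"
      proof (rule always_eventually, rule allI)
        fix n
        note k = Kmem[OF xK[rule_format, of n]]
        have "norm (snd (x n)) = fst (x n) * norm (arg (x n))" using k by (metis norm_scaleR abs_of_nonneg)
        also have "\<dots> \<le> fst (x n) * R" using k Rb by (intro mult_left_mono) auto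
        finally show "norm (snd (x n)) \<le> R * fst (x n)" by (simp add: mult.commute)
      qed
      show "(\<lambda>n. R * fst (x n)) \<longlonglongrightarrow> 0" using tendsto_mult_left[OF f, of R] True by simp
    qed
    then have "snd l = 0" using s LIMSEQ_unique by blast
    then have "l = (0, 0 *\<^sub>R x0)" using True by (simp add: prod_eq_iff)
    then show ?thesis unfolding K_def using x0 by blast
  next
    case False
    then have apos: "fst l > 0" using a0 by simp
    have ev: "\<forall>\<^sub>F n in sequentially. fst (x n) > 0" using order_tendstoD(1)[OF f apos] .
    have w: "(\<lambda>n. snd (x n) /\<^sub>R fst (x n)) \<longlonglongrightarrow> snd l /\<^sub>R fst l"
      using apos by (intro tendsto_intros f s) auto
    have "snd l /\<^sub>R fst l \<in> V"
    proof (rule Lim_in_closed_set[OF compact_imp_closed[OF cV] _ _ w])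
      show "\<forall>\<^sub>F n in sequentially. snd (x n) /\<^sub>R fst (x n) \<in> V"
        using ev by eventually_elim (metis Kmem xK arg_def order_less_irrefl)
    qed simp
    moreover have "l = (fst l, fst l *\<^sub>R (snd l /\<^sub>R fst l))" using apos by (simp add: prod_eq_iff)
    ultimately show ?thesis unfolding K_def using a0 by blast
  qed
qed

lemma complete: "Metric_space.mcomplete (SV V) (dS V)"
proof -
  interpret M: Metric_space "SV V" "dS V" by (rule metric)
  have C: "2 + R > 0" using Rpos by simp
  show ?thesis unfolding M.mcomplete_def
  proof (intro allI impI)
    fix \<sigma> assume Cs: "M.MCauchy \<sigma>"
    then have sS: "\<And>n. \<sigma> n \<in> SV V" unfolding M.MCauchy_def by auto
    define g where "g = (\<lambda>n t. P (\<sigma> n t))"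
    have gd: "dist (g m t) (g n t) \<le> (2+R) * dS V (\<sigma> m) (\<sigma> n)" if "t \<in> {0..1}" for m n t
    proof -
      have "dist (g m t) (g n t) \<le> (2+R) * dF V (\<sigma> m t) (\<sigma> n t)"
        unfolding g_def dist_norm using dF_low SV_CV sS that by blast
      also have "\<dots> \<le> (2+R) * dS V (\<sigma> m) (\<sigma> n)" using dS_ge sS that C by (intro mult_left_mono) auto
      finally show ?thesis .
    qed
    have "uniformly_Cauchy_on {0..1} g"
      unfolding uniformly_Cauchy_on_def
    proof (intro allI impI)
      fix e :: real assume e: "e > 0"
      obtain N where N: "\<And>m n. N \<le> m \<Longrightarrow> N \<le> n \<Longrightarrow> dS V (\<sigma> m) (\<sigma> n) < e / (2+R)"
        using Cs C e unfolding M.MCauchy_def by (meson divide_pos_pos)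
      show "\<exists>M. \<forall>x\<in>{0..1}. \<forall>m\<ge>M. \<forall>n\<ge>M. dist (g m x) (g n x) < e"
      proof (intro exI ballI allI impI)
        fix t m n assume "t \<in> {0..(1::real)}" "N \<le> m" "N \<le> n"
        then have "dist (g m t) (g n t) \<le> (2+R) * dS V (\<sigma> m) (\<sigma> n)" "dS V (\<sigma> m) (\<sigma> n) < e / (2+R)"
          using gd N by auto
        then show "dist (g m t) (g n t) < e" using C by (simp add: less_divide_eq mult.commute)
      qed
    qed
    then obtain l where ul: "uniform_limit {0..1} g l sequentially"
      using Cauchy_uniformly_convergent unfolding uniformly_convergent_on_def by blast
    have lc: "continuous_on {0..1} l"
      by (rule uniform_limit_theorem[OF _ ul]) (auto simp: g_def G_cont sS)
    have lK: "l t \<in> K" if "t \<in> {0..1}" for t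
    proof (rule Lim_in_closed_set[OF closed_K _ _ tendsto_uniform_limitI[OF ul that]])
      show "\<forall>\<^sub>F n in sequentially. g n t \<in> K" using P_CV SV_CV sS that by (simp add: g_def)
    qed simp
    have cS1: "curve l \<in> SV V" using curve_SV(1)[of l] lc lK by blast
    have cS2: "\<And>t. t \<in> {0..1} \<Longrightarrow> P (curve l t) = l t" using curve_SV(2)[of l] lc lK by blast
    show "\<exists>x. limitin M.mtopology \<sigma> x sequentially"
      unfolding M.limitin_metric
    proof (intro exI conjI allI impI)
      show "curve l \<in> SV V" by (rule cS1)
      fix e :: real assume e: "e > 0"
      have "\<forall>\<^sub>F n in sequentially. \<forall>t\<in>{0..1}. dist (g n t) (l t) < e / (2 * (2+R))"
        using ul C e unfolding uniform_limit_iff by auto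
      then show "\<forall>\<^sub>F n in sequentially. \<sigma> n \<in> SV V \<and> dS V (\<sigma> n) (curve l) < e"
      proof eventually_elim
        case (elim n)
        have "dS V (\<sigma> n) (curve l) \<le> e / 2"
        proof (rule dS_le[OF sS cS1])
          fix t :: real assume t: "t \<in> {0..1}"
          have "dF V (\<sigma> n t) (curve l t) \<le> (2+R) * norm (P (\<sigma> n t) - P (curve l t))"
            using dF_up SV_CV sS cS1 t by blast
          also have "\<dots> = (2+R) * dist (g n t) (l t)" using cS2[OF t] by (simp add: g_def dist_norm)
          also have "\<dots> \<le> (2+R) * (e / (2 * (2+R)))" using elim t C by (intro mult_left_mono) (auto intro: less_imp_le)
          also have "\<dots> = e / 2" using C by (simp add: field_simps)
          finally show "dF V (\<sigma> n t) (curve l t) \<le> e / 2" .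
        qed
        then show ?case using sS e by auto
      qed
    qed
  qed
qed

end


definition rr :: "real \<Rightarrow> real" where "rr u = min 1 (max 0 u)"
definition ww :: "nat \<Rightarrow> nat \<Rightarrow> real \<Rightarrow> real" where
  "ww n j t = rr (real n * t - real j + 1) - rr (real n * t - real j)"

lemma ww_nonneg: "0 \<le> ww n j t" unfolding ww_def rr_def by auto

lemma ww_sum:
  assumes "t \<in> {0..1}"
  shows "(\<Sum>j<Suc n. ww n j t) = 1"
proof -
  define f where "f j = rr (real n * t - real j + 1)" for j :: nat
  have "(\<Sum>j<Suc n. ww n j t) = (\<Sum>j<Suc n. f j - f (Suc j))"
    unfolding ww_def f_def by (intro sum.cong refl) (simp add: algebra_simps)
  also have "\<dots> = f 0 - f (Suc n)" by (rule sum_lessThan_telescope')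
  also have "\<dots> = 1"
  proof -
    have "real n * t \<ge> 0" using assms by simp
    moreover have "real n * t \<le> real n" using assms mult_left_mono[of t 1 "real n"] by simp
    ultimately show ?thesis unfolding f_def rr_def by simp
  qed
  finally show ?thesis .
qed

lemma ww_near:
  assumes "n > 0" "ww n j t \<noteq> 0"
  shows "\<bar>t - real j / real n\<bar> < 1 / real n"
proof -
  have "\<bar>real n * t - real j\<bar> < 1" using assms(2) unfolding ww_def rr_def
    by (cases "real n * t - real j \<ge> 1"; cases "real n * t - real j \<le> -1") auto
  moreover have "t - real j / real n = (real n * t - real j) / real n" using assms(1) by (simp add: field_simps)
  ultimately show ?thesis using assms(1) by (simp add: abs_divide divide_strict_right_mono)
qed

lemma ww_cont: "continuous_on S (ww n j)"
  unfolding ww_def rr_def by (intro continuous_intros)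

context SVs begin

lemma convex_K: assumes cvx: "convex V" shows "convex K"
proof (rule convexI)
  fix p q :: "real \<times> 'a" and u v :: real
  assume pK: "p \<in> K" and qK: "q \<in> K" and u: "0 \<le> u" and v: "0 \<le> v" and uv: "u + v = 1"
  obtain a x where ax: "a \<ge> 0" "x \<in> V" "p = (a, a *\<^sub>R x)" using pK unfolding K_def by blast
  obtain b y where bq: "b \<ge> 0" "y \<in> V" "q = (b, b *\<^sub>R y)" using qK unfolding K_def by blast
  define s where "s = u * a + v * b"
  have s0: "s \<ge> 0" unfolding s_def using ax(1) bq(1) u v by simp
  show "u *\<^sub>R p + v *\<^sub>R q \<in> K"
  proof (cases "s = 0")
    case True
    then have "u * a = 0" "v * b = 0" using u v ax(1) bq(1) unfolding s_def
      by (smt (verit) mult_nonneg_nonneg)+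
    then have "u *\<^sub>R p + v *\<^sub>R q = (0, 0 *\<^sub>R x)" using ax(3) bq(3) by auto
    then show ?thesis unfolding K_def using ax(2) by blast
  next
    case False
    then have spos: "s > 0" using s0 by simp
    define z where "z = (u * a / s) *\<^sub>R x + (v * b / s) *\<^sub>R y"
    have "z \<in> V" unfolding z_def
    proof (rule convexD[OF cvx ax(2) bq(2)])
      show "0 \<le> u * a / s" "0 \<le> v * b / s" using u v ax(1) bq(1) spos by auto
      show "u * a / s + v * b / s = 1" using spos unfolding s_def by (simp add: add_divide_distrib[symmetric])
    qed
    moreover have "u *\<^sub>R p + v *\<^sub>R q = (s, s *\<^sub>R z)"
      unfolding z_def using ax(3) bq(3) spos by (simp add: s_def scaleR_add_right)
    ultimately show ?thesis unfolding K_def using s0 by blast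
  qed
qed


lemma separable_SV:
  assumes cvx: "convex V"
  shows "separable_space (Metric_space.mtopology (SV V) (dS V))"
proof -
  interpret M: Metric_space "SV V" "dS V" by (rule metric)
  have C: "2 + R > 0" using Rpos by simp
  obtain Qd where Qd: "countable Qd" "Qd \<subseteq> K" "K \<subseteq> closure Qd" using separable by blast
  define L :: "nat \<Rightarrow> (real \<times> 'a) list \<Rightarrow> real \<Rightarrow> real \<times> 'a" where "L n qs t = (\<Sum>j<Suc n. ww n j t *\<^sub>R qs ! j)" for n qs t
  define I where "I = {(n, qs). length qs = Suc n \<and> set qs \<subseteq> Qd}"
  define D where "D = (\<lambda>(n, qs). curve (L n qs)) ` I"
  have Lc: "continuous_on {0..1} (L n qs)" for n qs
    unfolding L_def by (intro continuous_on_sum continuous_on_scaleR ww_cont continuous_on_const)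
  have LK: "L n qs t \<in> K" if "length qs = Suc n" "set qs \<subseteq> Qd" "t \<in> {0..1}" for n qs t
    unfolding L_def
  proof (rule convex_sum[OF _ convex_K[OF cvx]])
    show "(\<Sum>i<Suc n. ww n i t) = 1" using ww_sum[OF that(3)] .
    fix i assume "i \<in> {..<Suc n}"
    then have "qs ! i \<in> set qs" using that(1) by simp
    then show "qs ! i \<in> K" using that(2) Qd(2) by blast
    show "0 \<le> ww n i t" by (rule ww_nonneg)
  qed simp
  have DS: "D \<subseteq> SV V" unfolding D_def I_def using curve_SV(1)[OF Lc] LK by auto
  have cI: "countable I"
  proof (rule countable_subset)
    show "I \<subseteq> UNIV \<times> lists Qd" unfolding I_def by auto
    show "countable (UNIV \<times> lists Qd :: (nat \<times> _) set)" using Qd(1) by auto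
  qed
  have cD: "countable D" unfolding D_def using cI by blast
  have dense: "\<exists>y\<in>D. dS V \<rho> y < r" if \<rho>: "\<rho> \<in> SV V" and r: "r > 0" for \<rho> r
  proof -
    define g where "g t = P (\<rho> t)" for t
    define e where "e = r / (4 * (2+R))"
    have e: "e > 0" unfolding e_def using r C by simp
    have gK: "g t \<in> K" if "t \<in> {0..1}" for t unfolding g_def using P_CV SV_CV \<rho> that by blast
    have "uniformly_continuous_on {0..1} g" unfolding g_def
      by (intro compact_uniformly_continuous G_cont \<rho>) simp
    then obtain \<delta> where \<delta>: "\<delta> > 0" "\<And>s t. s \<in> {0..1} \<Longrightarrow> t \<in> {0..1} \<Longrightarrow> dist t s < \<delta> \<Longrightarrow> dist (g t) (g s) < e"
      unfolding uniformly_continuous_on_def using e by metis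
    obtain m where m: "inverse (real (Suc m)) < \<delta>" using reals_Archimedean[OF \<delta>(1)] by blast
    define N where "N = Suc m"
    have N: "N > 0" "1 / real N < \<delta>" using m by (auto simp: N_def divide_inverse)
    define qf where "qf j = (SOME q. q \<in> Qd \<and> dist q (g (real j / real N)) < e)" for j
    have qf: "qf j \<in> Qd \<and> dist (qf j) (g (real j / real N)) < e" if "j \<le> N" for j
    proof -
      have "real j / real N \<in> {0..1}" using that N by (auto simp: divide_le_eq_1)
      then have "g (real j / real N) \<in> closure Qd" using gK Qd(3) by blast
      then have "\<exists>q. q \<in> Qd \<and> dist q (g (real j / real N)) < e" using e unfolding closure_approachable by blast
      then show ?thesis unfolding qf_def by (rule someI_ex)
    qed
    define qs where "qs = map qf [0..<Suc N]"
    have qs: "length qs = Suc N" "set qs \<subseteq> Qd" "\<And>j. j < Suc N \<Longrightarrow> qs ! j = qf j"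
      unfolding qs_def using qf by (auto simp del: upt_Suc)
    have yD: "curve (L N qs) \<in> D" unfolding D_def I_def using qs by auto
    have yS: "curve (L N qs) \<in> SV V" using yD DS by blast
    have Py: "P (curve (L N qs) t) = L N qs t" if "t \<in> {0..1}" for t
      using curve_SV(2)[OF Lc _ that] LK qs by blast
    have "dS V \<rho> (curve (L N qs)) \<le> r / 2"
    proof (rule dS_le[OF \<rho> yS])
      fix t :: real assume t: "t \<in> {0..1}"
      have bound: "norm (g t - qs ! j) \<le> 2 * e" if j: "j \<in> {..<Suc N}" "ww N j t \<noteq> 0" for j
      proof -
        have jN: "j \<le> N" using j by simp
        have "\<bar>t - real j / real N\<bar> < 1 / real N" using ww_near[OF N(1) j(2)] .
        then have "dist t (real j / real N) < \<delta>" using N by (simp add: dist_real_def)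
        moreover have "real j / real N \<in> {0..1}" using jN N by (auto simp: divide_le_eq_1)
        ultimately have "dist (g t) (g (real j / real N)) < e" using \<delta>(2) t by blast
        moreover have "dist (qs ! j) (g (real j / real N)) < e" using qf[OF jN] qs(3) j by simp
        ultimately have "dist (g t) (qs ! j) < 2 * e" using dist_triangle3[of "g t" "qs ! j" "g (real j / real N)"] dist_commute[of "g (real j / real N)" "g t"] dist_commute[of "g (real j / real N)" "qs ! j"] by linarith
        then show ?thesis by (simp add: dist_norm)
      qed
      have "g t - L N qs t = (\<Sum>j<Suc N. ww N j t *\<^sub>R (g t - qs ! j))"
      proof -
        have "(\<Sum>j<Suc N. ww N j t *\<^sub>R (g t - qs ! j)) = (\<Sum>j<Suc N. ww N j t *\<^sub>R g t) - L N qs t"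
          unfolding L_def scaleR_diff_right by (rule sum_subtractf)
        also have "(\<Sum>j<Suc N. ww N j t *\<^sub>R g t) = (\<Sum>j<Suc N. ww N j t) *\<^sub>R g t"
          by (rule scaleR_sum_left[symmetric])
        also have "\<dots> = g t" using ww_sum[OF t] by simp
        finally show ?thesis by simp
      qed
      then have "norm (g t - L N qs t) \<le> (\<Sum>j<Suc N. norm (ww N j t *\<^sub>R (g t - qs ! j)))"
        by (simp only: norm_sum)
      also have "\<dots> \<le> (\<Sum>j<Suc N. ww N j t * (2 * e))"
      proof (rule sum_mono)
        fix j assume j: "j \<in> {..<Suc N}"
        show "norm (ww N j t *\<^sub>R (g t - qs ! j)) \<le> ww N j t * (2 * e)"
        proof (cases "ww N j t = 0")
          case False
          then show ?thesis using bound[OF j False] ww_nonneg[of N j t] by (simp add: mult_left_mono)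
        qed simp
      qed
      also have "\<dots> = 2 * e" using ww_sum[OF t] by (simp add: sum_distrib_right[symmetric])
      finally have nb: "norm (g t - L N qs t) \<le> 2 * e" .
      have "dF V (\<rho> t) (curve (L N qs) t) \<le> (2+R) * norm (P (\<rho> t) - P (curve (L N qs) t))"
        using dF_up SV_CV \<rho> yS t by blast
      also have "\<dots> = (2+R) * norm (g t - L N qs t)" using Py[OF t] by (simp add: g_def)
      also have "\<dots> \<le> (2+R) * (2 * e)" using nb C by (intro mult_left_mono) auto
      also have "\<dots> = r / 2" unfolding e_def using C by (simp add: field_simps)
      finally show "dF V (\<rho> t) (curve (L N qs) t) \<le> r / 2" .
    qed
    then show ?thesis using yD r by (intro bexI[of _ "curve (L N qs)"]) auto
  qed
  show ?thesis unfolding separable_space_def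
  proof (intro exI conjI)
    show "countable D" by (rule cD)
    show "D \<subseteq> topspace M.mtopology" using DS by simp
    show "M.mtopology closure_of D = topspace M.mtopology"
      unfolding M.metric_closure_of using dense DS by (auto simp: subset_iff)
  qed
qed

end

theorem proposition3p6:
  fixes \<Omega> :: "'a::euclidean_space set"
  assumes "open \<Omega>" and "connected \<Omega>" and "bounded \<Omega>" and "\<Omega> \<noteq> {}"
  shows "Metric_space (SV (closure \<Omega>)) (dS (closure \<Omega>))
       \<and> Metric_space.mcomplete (SV (closure \<Omega>)) (dS (closure \<Omega>))
       \<and> (convex (closure \<Omega>) \<longrightarrow>
            separable_space (Metric_space.mtopology (SV (closure \<Omega>)) (dS (closure \<Omega>))))"
proof -
  have cV: "compact (closure \<Omega>)" using assms(3) by (simp add: compact_closure)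
  have ne: "closure \<Omega> \<noteq> {}" using assms(4) by simp
  obtain R where R: "R > 0" "\<And>x. x \<in> closure \<Omega> \<Longrightarrow> norm x \<le> R"
    using bounded_pos[of "closure \<Omega>"] assms(3) by (auto simp: bounded_closure)
  interpret S: SVs "closure \<Omega>" R using cV ne R by unfold_locales auto
  show ?thesis using S.metric S.complete S.separable_SV by blast
qed

end
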